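(* Let $V$ be a finite set, $\pi$ a probability distribution on $V$, $\mathcal{D}$ a finite set, and for all $x\in\mathcal{D}$ let $M_x\subseteq V$ with $\Pr_{v\sim\pi}[v\in M_x]=\varepsilon$ for a fixed $\varepsilon\in(0,1)$. Work in $\mathbb{C}^{\{\perp\}\cup V}$ (with $\perp\notin V$), let $O_x$ be operators on a space $\mathcal{H}$ with $O_x^2=I$, and set \[|\psi_x\rangle=\frac{1}{\sqrt{\varepsilon}}\sum_{v\in M_x}\sqrt{\pi_v}\,|v\rangle.\] Define $R=\{(|\perp\rangle+|\psi_x\rangle,\ |\perp\rangle-|\psi_x\rangle,\ O_x)\}_{x\in\mathcal{D}}$ and $R'=\{(\mathbb{1}_\perp-\tfrac{1}{\varepsilon}\pi|_{M_x},\ \mathbb{1}_\perp+\mathbb{1}_{M_x},\ O_x)\}_{x\in\mathcal{D}}$, where $\pi|_{M_x}$ is the vector equal to $\pi$ on $M_x$ and $0$ elsewhere and $\mathbb{1}_S$ is the indicator vector of $S$. Then the sets of feasible solutions of $R$ and $R'$ are identical, and $R'$ is a hyperedge problem.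
   Context: A state-reflection problem $\{(|\sigma_x^+\rangle,|\sigma_x^-\rangle,O_x)\}_{x\in\mathcal{D}}$ consists of orthogonal vectors $|\sigma_x^\pm\rangle$ in a finite-dimensional space $\mathcal{V}$ and operators $O_x$ on $\mathcal{H}$ with $O_x^2=I$; a feasible solution is a finite-dimensional space $\mathcal{W}$ and vectors $|w_x^s\rangle\in\mathcal{H}\otimes\mathcal{W}$ ($s\in\{+,-\}$) with $\langle\sigma_x^s|\sigma_y^t\rangle-st\langle\sigma_x^s|\sigma_y^t\rangle=\langle w_x^s|((I-O_x^\dagger O_y)\otimes I)|w_y^t\rangle$ for all $x,y$ and $s,t$. A hyperedge problem on a finite set $V'$ is a state-reflection problem over $\mathbb{C}^{V'}$ with $|\sigma_x^+\rangle=\delta_x$, $|\sigma_x^-\rangle=U_x$ such that $\sum_{v}(\delta_x)_v=0$ and $U_x$ is constant on the support of $\delta_x$, for every $x$. *)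

theory Defs
  imports Complex_Main
begin

text \<open>Vectors in C^A are functions A-coordinates to complex; the coordinate set is explicit.
  The finite-dimensional space H is C^'h for a finite type 'h; operators on H are 'h x 'h matrices.
  A vector of H (x) W, with W = C^Wc for a finite coordinate set Wc, is a function on 'h x 'w
  (only coordinates in UNIV x Wc matter). Signs s in {+,-} are booleans: True = +, False = -.\<close>

definition cinner :: "'a set \<Rightarrow> ('a \<Rightarrow> complex) \<Rightarrow> ('a \<Rightarrow> complex) \<Rightarrow> complex" where
  "cinner A u v = (\<Sum>i\<in>A. cnj (u i) * v i)"

definition mmult :: "('h::finite \<Rightarrow> 'h \<Rightarrow> complex) \<Rightarrow> ('h \<Rightarrow> 'h \<Rightarrow> complex) \<Rightarrow> ('h \<Rightarrow> 'h \<Rightarrow> complex)" where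
  "mmult A B = (\<lambda>i j. \<Sum>k\<in>UNIV. A i k * B k j)"

definition madj :: "('h \<Rightarrow> 'h \<Rightarrow> complex) \<Rightarrow> ('h \<Rightarrow> 'h \<Rightarrow> complex)" where
  "madj A = (\<lambda>i j. cnj (A j i))"

definition midI :: "'h \<Rightarrow> 'h \<Rightarrow> complex" where
  "midI = (\<lambda>i j. if i = j then 1 else 0)"

definition tensor_id_apply :: "('h::finite \<Rightarrow> 'h \<Rightarrow> complex) \<Rightarrow> ('h \<times> 'w \<Rightarrow> complex) \<Rightarrow> ('h \<times> 'w \<Rightarrow> complex)" where
  "tensor_id_apply A w = (\<lambda>(i, a). \<Sum>j\<in>UNIV. A i j * w (j, a))"

definition sgnprod :: "bool \<Rightarrow> bool \<Rightarrow> complex" where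
  "sgnprod s t = (if s = t then 1 else -1)"

definition state_reflection_problem ::
  "'a set \<Rightarrow> 'd set \<Rightarrow> ('d \<Rightarrow> bool \<Rightarrow> 'a \<Rightarrow> complex) \<Rightarrow> ('d \<Rightarrow> 'h::finite \<Rightarrow> 'h \<Rightarrow> complex) \<Rightarrow> bool" where
  "state_reflection_problem Vc D \<sigma> Op \<longleftrightarrow>
     finite Vc \<and>
     (\<forall>x\<in>D. \<forall>s. \<forall>i. i \<notin> Vc \<longrightarrow> \<sigma> x s i = 0) \<and>
     (\<forall>x\<in>D. cinner Vc (\<sigma> x True) (\<sigma> x False) = 0) \<and>
     (\<forall>x\<in>D. mmult (Op x) (Op x) = midI)"

definition feasible_solution ::
  "'a set \<Rightarrow> 'd set \<Rightarrow> ('d \<Rightarrow> bool \<Rightarrow> 'a \<Rightarrow> complex) \<Rightarrow> ('d \<Rightarrow> 'h::finite \<Rightarrow> 'h \<Rightarrow> complex)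
    \<Rightarrow> 'w set \<Rightarrow> ('d \<Rightarrow> bool \<Rightarrow> 'h \<times> 'w \<Rightarrow> complex) \<Rightarrow> bool" where
  "feasible_solution Vc D \<sigma> Op Wc w \<longleftrightarrow>
     finite Wc \<and>
     (\<forall>x\<in>D. \<forall>y\<in>D. \<forall>s t.
        cinner Vc (\<sigma> x s) (\<sigma> y t) - sgnprod s t * cinner Vc (\<sigma> x s) (\<sigma> y t)
        = cinner (UNIV \<times> Wc) (w x s)
            (tensor_id_apply (\<lambda>i j. midI i j - mmult (madj (Op x)) (Op y) i j) (w y t)))"

definition hyperedge_problem ::
  "'a set \<Rightarrow> 'd set \<Rightarrow> ('d \<Rightarrow> bool \<Rightarrow> 'a \<Rightarrow> complex) \<Rightarrow> ('d \<Rightarrow> 'h::finite \<Rightarrow> 'h \<Rightarrow> complex) \<Rightarrow> bool" where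
  "hyperedge_problem Vc D \<sigma> Op \<longleftrightarrow>
     state_reflection_problem Vc D \<sigma> Op \<and>
     (\<forall>x\<in>D. (\<Sum>v\<in>Vc. \<sigma> x True v) = 0 \<and>
            (\<exists>c. \<forall>v\<in>Vc. \<sigma> x True v \<noteq> 0 \<longrightarrow> \<sigma> x False v = c))"


text \<open>Coordinates of C^({bot} u V) are 'v option, with None playing the role of bot (so bot is not in V).\<close>
definition ket_bot :: "'v option \<Rightarrow> complex" where
  "ket_bot = (\<lambda>i. if i = None then 1 else 0)"

definition psi_vec :: "('d \<Rightarrow> 'v set) \<Rightarrow> ('v \<Rightarrow> real) \<Rightarrow> real \<Rightarrow> 'd \<Rightarrow> 'v option \<Rightarrow> complex" where
  "psi_vec M \<pi> \<epsilon> x = (\<lambda>i. case i of None \<Rightarrow> 0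
      | Some v \<Rightarrow> if v \<in> M x then complex_of_real (sqrt (\<pi> v) / sqrt \<epsilon>) else 0)"

definition pi_restr :: "('d \<Rightarrow> 'v set) \<Rightarrow> ('v \<Rightarrow> real) \<Rightarrow> 'd \<Rightarrow> 'v option \<Rightarrow> complex" where
  "pi_restr M \<pi> x = (\<lambda>i. case i of None \<Rightarrow> 0
      | Some v \<Rightarrow> if v \<in> M x then complex_of_real (\<pi> v) else 0)"

definition ind_vec :: "('d \<Rightarrow> 'v set) \<Rightarrow> 'd \<Rightarrow> 'v option \<Rightarrow> complex" where
  "ind_vec M x = (\<lambda>i. case i of None \<Rightarrow> 0 | Some v \<Rightarrow> if v \<in> M x then 1 else 0)"

definition sigmaR :: "('d \<Rightarrow> 'v set) \<Rightarrow> ('v \<Rightarrow> real) \<Rightarrow> real \<Rightarrow> 'd \<Rightarrow> bool \<Rightarrow> 'v option \<Rightarrow> complex" where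
  "sigmaR M \<pi> \<epsilon> x s = (\<lambda>i. if s then ket_bot i + psi_vec M \<pi> \<epsilon> x i else ket_bot i - psi_vec M \<pi> \<epsilon> x i)"

definition sigmaR' :: "('d \<Rightarrow> 'v set) \<Rightarrow> ('v \<Rightarrow> real) \<Rightarrow> real \<Rightarrow> 'd \<Rightarrow> bool \<Rightarrow> 'v option \<Rightarrow> complex" where
  "sigmaR' M \<pi> \<epsilon> x s = (\<lambda>i. if s then ket_bot i - pi_restr M \<pi> x i / complex_of_real \<epsilon>
                                  else ket_bot i + ind_vec M x i)"

end

theory Submission
  imports Defs
begin

lemma cinner_opt:
  assumes "finite V"
  shows "cinner (insert None (Some ` V)) u w = cnj (u None) * w None + (\<Sum>v\<in>V. cnj (u (Some v)) * w (Some v))"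
  using assms by (simp add: cinner_def sum.reindex image_iff)

lemma sq_aux:
  assumes "a \<ge> 0" "e > 0"
  shows "complex_of_real (sqrt a / sqrt e) * complex_of_real (sqrt a / sqrt e) = complex_of_real (a / e)"
proof -
  have "(sqrt a / sqrt e) * (sqrt a / sqrt e) = a / e"
    using assms by (simp add: real_sqrt_mult[symmetric] real_sqrt_divide[symmetric])
  then show ?thesis by (metis of_real_mult)
qed

lemma cross_eq:
  assumes finV: "finite V" and pn: "\<forall>v\<in>V. \<pi> v \<ge> 0" and e: "0 < \<epsilon>"
    and Mx: "M x \<subseteq> V" and My: "M y \<subseteq> V" and st: "s \<noteq> t"
  shows "cinner (insert None (Some ` V)) (sigmaR M \<pi> \<epsilon> x s) (sigmaR M \<pi> \<epsilon> y t)
       = cinner (insert None (Some ` V)) (sigmaR' M \<pi> \<epsilon> x s) (sigmaR' M \<pi> \<epsilon> y t)"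
proof -
  define S where "S = (\<Sum>v\<in>V. if v \<in> M x \<and> v \<in> M y then complex_of_real (\<pi> v / \<epsilon>) else 0)"
  have A: "cinner (insert None (Some ` V)) (sigmaR M \<pi> \<epsilon> x s) (sigmaR M \<pi> \<epsilon> y t) = 1 - S"
  proof -
    have "(\<Sum>v\<in>V. cnj (sigmaR M \<pi> \<epsilon> x s (Some v)) * sigmaR M \<pi> \<epsilon> y t (Some v)) = - S"
      unfolding S_def sum_negf[symmetric]
    proof (rule sum.cong)
      fix v assume v: "v \<in> V"
      show "cnj (sigmaR M \<pi> \<epsilon> x s (Some v)) * sigmaR M \<pi> \<epsilon> y t (Some v) =
          - (if v \<in> M x \<and> v \<in> M y then complex_of_real (\<pi> v / \<epsilon>) else 0)"
        using st sq_aux[OF bspec[OF pn v] e]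
        by (cases s; cases t; simp add: sigmaR_def ket_bot_def psi_vec_def)
    qed simp
    then show ?thesis using st
      by (simp add: cinner_opt[OF finV] sigmaR_def ket_bot_def psi_vec_def)
  qed
  have B: "cinner (insert None (Some ` V)) (sigmaR' M \<pi> \<epsilon> x s) (sigmaR' M \<pi> \<epsilon> y t) = 1 - S"
  proof -
    have "(\<Sum>v\<in>V. cnj (sigmaR' M \<pi> \<epsilon> x s (Some v)) * sigmaR' M \<pi> \<epsilon> y t (Some v)) = - S"
      unfolding S_def sum_negf[symmetric]
    proof (rule sum.cong)
      fix v assume v: "v \<in> V"
      show "cnj (sigmaR' M \<pi> \<epsilon> x s (Some v)) * sigmaR' M \<pi> \<epsilon> y t (Some v) =
          - (if v \<in> M x \<and> v \<in> M y then complex_of_real (\<pi> v / \<epsilon>) else 0)"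
        using st
        by (cases s; cases t; simp add: sigmaR'_def ket_bot_def pi_restr_def ind_vec_def)
    qed simp
    then show ?thesis using st
      by (simp add: cinner_opt[OF finV] sigmaR'_def ket_bot_def pi_restr_def ind_vec_def)
  qed
  show ?thesis using A B by simp
qed

lemma feas_cong:
  assumes "\<And>x y s t. x \<in> D \<Longrightarrow> y \<in> D \<Longrightarrow>
     cinner Vc (s1 x s) (s1 y t) - sgnprod s t * cinner Vc (s1 x s) (s1 y t)
   = cinner Vc (s2 x s) (s2 y t) - sgnprod s t * cinner Vc (s2 x s) (s2 y t)"
  shows "feasible_solution Vc D s1 Op Wc w = feasible_solution Vc D s2 Op Wc w"
  unfolding feasible_solution_def
  apply (intro conj_cong refl ball_cong all_cong)
  using assms by (simp only:)

theorem theorem5p5: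
  fixes V :: "'v set" and \<pi> :: "'v \<Rightarrow> real" and D :: "'d set" and M :: "'d \<Rightarrow> 'v set"
    and \<epsilon> :: real and Op :: "'d \<Rightarrow> 'h::finite \<Rightarrow> 'h \<Rightarrow> complex"
  assumes finV: "finite V"
    and pi_nonneg: "\<forall>v\<in>V. \<pi> v \<ge> 0"
    and pi_sum: "(\<Sum>v\<in>V. \<pi> v) = 1"
    and finD: "finite D"
    and M_sub: "\<forall>x\<in>D. M x \<subseteq> V"
    and M_prob: "\<forall>x\<in>D. (\<Sum>v\<in>M x. \<pi> v) = \<epsilon>"
    and eps_pos: "0 < \<epsilon>" and eps_lt1: "\<epsilon> < 1"
    and O_inv: "\<forall>x\<in>D. mmult (Op x) (Op x) = midI"
  shows "(\<forall>(Wc::'w set) w.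
            feasible_solution (insert None (Some ` V)) D (sigmaR M \<pi> \<epsilon>) Op Wc w
            \<longleftrightarrow> feasible_solution (insert None (Some ` V)) D (sigmaR' M \<pi> \<epsilon>) Op Wc w)
         \<and> hyperedge_problem (insert None (Some ` V)) D (sigmaR' M \<pi> \<epsilon>) Op"
proof
  let ?Vc = "insert None (Some ` V)"
  have lhs: "cinner ?Vc (sigmaR M \<pi> \<epsilon> x s) (sigmaR M \<pi> \<epsilon> y t) - sgnprod s t * cinner ?Vc (sigmaR M \<pi> \<epsilon> x s) (sigmaR M \<pi> \<epsilon> y t)
     = cinner ?Vc (sigmaR' M \<pi> \<epsilon> x s) (sigmaR' M \<pi> \<epsilon> y t) - sgnprod s t * cinner ?Vc (sigmaR' M \<pi> \<epsilon> x s) (sigmaR' M \<pi> \<epsilon> y t)"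
    if "x \<in> D" "y \<in> D" for x y s t
  proof (cases "s = t")
    case True
    have "sgnprod s t = 1" using True by (simp add: sgnprod_def)
    then show ?thesis by (simp only: mult_1 diff_self)
  next
    case False
    have "cinner ?Vc (sigmaR M \<pi> \<epsilon> x s) (sigmaR M \<pi> \<epsilon> y t) = cinner ?Vc (sigmaR' M \<pi> \<epsilon> x s) (sigmaR' M \<pi> \<epsilon> y t)"
      using cross_eq[OF finV pi_nonneg eps_pos, of M x y s t] M_sub that False by blast
    then show ?thesis by (simp only:)
  qed
  show "\<forall>(Wc::'w set) w. feasible_solution ?Vc D (sigmaR M \<pi> \<epsilon>) Op Wc w
            \<longleftrightarrow> feasible_solution ?Vc D (sigmaR' M \<pi> \<epsilon>) Op Wc w"
    using feas_cong[of D ?Vc "sigmaR M \<pi> \<epsilon>" "sigmaR' M \<pi> \<epsilon>"] lhs by blast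
  have piM: "(\<Sum>v\<in>V. if v \<in> M x then complex_of_real (\<pi> v) else 0) = complex_of_real \<epsilon>" if "x \<in> D" for x
  proof -
    have "(\<Sum>v\<in>V. if v \<in> M x then complex_of_real (\<pi> v) else 0) = (\<Sum>v\<in>M x. complex_of_real (\<pi> v))"
    proof -
      have "V \<inter> M x = M x" using M_sub that by blast
      then show ?thesis using sum.inter_restrict[OF finV, of "\<lambda>v. complex_of_real (\<pi> v)" "M x"] by simp
    qed
    also have "\<dots> = complex_of_real (\<Sum>v\<in>M x. \<pi> v)" by simp
    also have "\<dots> = complex_of_real \<epsilon>" using M_prob that by simp
    finally show ?thesis .
  qed
  show "hyperedge_problem ?Vc D (sigmaR' M \<pi> \<epsilon>) Op"
    unfolding hyperedge_problem_def state_reflection_problem_def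
  proof (intro conjI ballI allI impI)
    show "finite ?Vc" using finV by simp
  next
    fix x s i assume x: "x \<in> D" and i: "i \<notin> ?Vc"
    then obtain v where "i = Some v" "v \<notin> V" by (cases i) auto
    then show "sigmaR' M \<pi> \<epsilon> x s i = 0" using M_sub x
      by (auto simp: sigmaR'_def ket_bot_def pi_restr_def ind_vec_def)
  next
    fix x assume x: "x \<in> D"
    have "(\<Sum>v\<in>V. cnj (sigmaR' M \<pi> \<epsilon> x True (Some v)) * sigmaR' M \<pi> \<epsilon> x False (Some v))
        = - (\<Sum>v\<in>V. if v \<in> M x then complex_of_real (\<pi> v) else 0) / complex_of_real \<epsilon>"
      unfolding sum_divide_distrib sum_negf[symmetric]
      by (rule sum.cong) (auto simp: sigmaR'_def ket_bot_def pi_restr_def ind_vec_def)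
    then show "cinner ?Vc (sigmaR' M \<pi> \<epsilon> x True) (sigmaR' M \<pi> \<epsilon> x False) = 0"
      using piM[OF x] eps_pos
      by (simp add: cinner_opt[OF finV] sigmaR'_def ket_bot_def pi_restr_def ind_vec_def)
  next
    fix x assume "x \<in> D" then show "mmult (Op x) (Op x) = midI" using O_inv by simp
  next
    fix x assume x: "x \<in> D"
    have "(\<Sum>v\<in>V. sigmaR' M \<pi> \<epsilon> x True (Some v))
        = - (\<Sum>v\<in>V. if v \<in> M x then complex_of_real (\<pi> v) else 0) / complex_of_real \<epsilon>"
      unfolding sum_divide_distrib sum_negf[symmetric]
      by (rule sum.cong) (auto simp: sigmaR'_def ket_bot_def pi_restr_def ind_vec_def)
    then show "(\<Sum>v\<in>?Vc. sigmaR' M \<pi> \<epsilon> x True v) = 0"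
      using piM[OF x] eps_pos finV
      by (simp add: sum.reindex sigmaR'_def ket_bot_def pi_restr_def image_iff)
  next
    fix x assume x: "x \<in> D"
    show "\<exists>c. \<forall>v\<in>?Vc. sigmaR' M \<pi> \<epsilon> x True v \<noteq> 0 \<longrightarrow> sigmaR' M \<pi> \<epsilon> x False v = c"
      by (rule exI[of _ 1]) (auto simp: sigmaR'_def ket_bot_def pi_restr_def ind_vec_def)
  qed
qed

end
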